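(* Assume that for each $i=1,\dots,N$ the map $(t,\boldsymbol{\theta})\mapsto g(t,\mathbf{x}_i;\boldsymbol{\theta})$ is continuous on $[0,y_i]\times\mathbb{R}^m$. Fix $\phi>0$ and $\boldsymbol{\theta}\in\mathbb{R}^m$, and for each $i$ let $\Psi_i$ be a marked Poisson process on $[0,y_i]\times\mathbb{R}_+$ with intensity $\lambda_i(t,\omega;\phi)=\lambda_0(t,\mathbf{x}_i;\phi)\,p_{\mathrm{PG}}(\omega\mid 1,0)$. Then for every $i=1,\dots,N$, with probability one the sum $$H(\Psi_i)=\sum_{(t_j,\omega_j)\in\Psi_i}f(\omega_j,-g(t_j,\mathbf{x}_i;\boldsymbol{\theta}))$$ is absolutely convergent.
   Context: $y_i>0$, $\mathbf{x}_i\in\mathbb{R}^p$. $g:\mathbb{R}_+\times\mathbb{R}^p\times\mathbb{R}^m\to\mathbb{R}$ is a given function. $\sigma(z)=1/(1+e^{-z})$. $p_{\boldsymbol{\theta}}$ is the density of $\mathcal{N}(\mathbf{0},\mathbf{I}_m)$. $Z(t,\mathbf{x})=\int_{\mathbb{R}^m}\sigma(g(t,\mathbf{x};\boldsymbol{\theta}))\,p_{\boldsymbol{\theta}}(\boldsymbol{\theta})\,d\boldsymbol{\theta}$. For fixed $\rho>0$, $\lambda_0(t;\phi)=\phi\,t^{\rho-1}$ and $\lambda_0(t,\mathbf{x};\phi)=\lambda_0(t;\phi)/Z(t,\mathbf{x})$. $f(\omega,z)=\frac{z}{2}-\frac{z^2}{2}\omega-\log 2$. The Pólya–Gamma distribution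 $\mathrm{PG}(b,c)$ is the law of $\frac{1}{2\pi^2}\sum_{k=1}^\infty \frac{g_k}{(k-1/2)^2+c^2/(4\pi^2)}$ with $g_k$ i.i.d. $\mathrm{Gamma}(b,1)$; $p_{\mathrm{PG}}(\omega\mid b,c)$ is its density on $\mathbb{R}_+$. A marked Poisson process with intensity $\lambda(t,\omega)$ is a Poisson point process on the product space with that intensity. *)

theory Defs
  imports "HOL-Probability.Probability"
begin

definition sigmoid :: "real \<Rightarrow> real" where
  "sigmoid z = 1 / (1 + exp (- z))"

definition Zfun :: "(real \<Rightarrow> 'p \<Rightarrow> real^'m \<Rightarrow> real) \<Rightarrow> real \<Rightarrow> 'p \<Rightarrow> real" where
  "Zfun g t x = (\<integral>\<theta>. sigmoid (g t x \<theta>) * (\<Prod>j\<in>UNIV. std_normal_density (\<theta> $ j)) \<partial>lborel)"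

definition lambda0 :: "real \<Rightarrow> real \<Rightarrow> real \<Rightarrow> real" where
  "lambda0 \<rho> \<phi> t = \<phi> * t powr (\<rho> - 1)"

definition lambda0x :: "real \<Rightarrow> (real \<Rightarrow> 'p \<Rightarrow> real^'m \<Rightarrow> real) \<Rightarrow> real \<Rightarrow> real \<Rightarrow> 'p \<Rightarrow> real" where
  "lambda0x \<rho> g \<phi> t x = lambda0 \<rho> \<phi> t / Zfun g t x"

definition fPG :: "real \<Rightarrow> real \<Rightarrow> real" where
  "fPG \<omega> z = z / 2 - z^2 / 2 * \<omega> - ln 2"

definition gamma_density :: "real \<Rightarrow> real \<Rightarrow> real" where
  "gamma_density b x = (if 0 < x then x powr (b - 1) * exp (- x) / Gamma b else 0)"

(* PG(b,c): law of 1/(2 pi^2) sum_{k>=1} g_k / ((k-1/2)^2 + c^2/(4 pi^2)), g_k iid Gamma(b,1);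
   here k is re-indexed from 0, so (k-1/2) becomes (k+1/2). *)
definition PG_law :: "real \<Rightarrow> real \<Rightarrow> real measure" where
  "PG_law b c = distr (PiM (UNIV :: nat set) (\<lambda>k. density lborel (\<lambda>x. ennreal (gamma_density b x))))
      borel (\<lambda>gs. (1 / (2 * pi^2)) * (\<Sum>k. gs k / ((real k + 1/2)^2 + c^2 / (4 * pi^2))))"

definition p_PG :: "real \<Rightarrow> real \<Rightarrow> real \<Rightarrow> real" where
  "p_PG b c \<omega> = enn2real (RN_deriv lborel (PG_law b c) \<omega>)"

(* Poisson point process on R x R (realised as a random counting measure Psi)
   with intensity measure  A |-> int_A lam d(Lebesgue).  A process on a subset S
   with intensity lam is the same as one on R^2 with intensity (indicator S * lam). *)
definition poisson_process ::
  "'a measure \<Rightarrow> ('a \<Rightarrow> (real \<times> real) measure) \<Rightarrow> (real \<times> real \<Rightarrow> real) \<Rightarrow> bool" where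
  "poisson_process M \<Psi> lam \<longleftrightarrow>
     prob_space M \<and>
     (\<forall>s\<in>space M. sets (\<Psi> s) = sets borel \<and>
        (\<forall>A\<in>sets borel. emeasure (\<Psi> s) A \<in> insert \<infinity> (range of_nat))) \<and>
     (\<forall>A\<in>sets borel. (\<lambda>s. emeasure (\<Psi> s) A) \<in> borel_measurable M) \<and>
     (\<forall>A\<in>sets borel.
        let \<mu> = (\<integral>\<^sup>+ p. ennreal (lam p) * indicator A p \<partial>lborel) in
        (\<mu> = \<infinity> \<longrightarrow> (AE s in M. emeasure (\<Psi> s) A = \<infinity>)) \<and>
        (\<mu> < \<infinity> \<longrightarrow> (\<forall>n::nat. measure M {s\<in>space M. emeasure (\<Psi> s) A = of_nat n}
                        = exp (- enn2real \<mu>) * enn2real \<mu> ^ n / fact n))) \<and>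
     (\<forall>(F::nat set) A. finite F \<longrightarrow> (\<forall>i\<in>F. A i \<in> sets borel) \<longrightarrow> disjoint_family_on A F \<longrightarrow>
        prob_space.indep_vars M (\<lambda>_. borel) (\<lambda>i s. emeasure (\<Psi> s) (A i)) F)"

end

theory Submission
  imports Defs
begin


lemma PG_prob: "prob_space (PG_law 1 0)"
proof -
  have d: "density lborel (\<lambda>x. ennreal (gamma_density 1 x)) = density lborel (exponential_density 1)"
  proof (rule density_cong)
    show "AE x in lborel. ennreal (gamma_density 1 x) = ennreal (exponential_density 1 x)"
      using AE_lborel_singleton[of "0::real"]
      by eventually_elim (auto simp: gamma_density_def exponential_density_def)
    show "(\<lambda>x. ennreal (gamma_density 1 x)) \<in> borel_measurable lborel"
      unfolding gamma_density_def by measurable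
  qed (auto simp: exponential_density_def)
  have "prob_space (PiM (UNIV :: nat set) (\<lambda>k. density lborel (\<lambda>x. ennreal (gamma_density 1 x))))"
    unfolding d by (rule prob_space_PiM) (rule prob_space_exponential_density, simp)
  then show ?thesis unfolding PG_law_def
    by (rule prob_space.prob_space_distr) measurable
qed

lemma RN_int_le:
  fixes N :: "real measure"
  shows "(\<integral>\<^sup>+ x. RN_deriv lborel N x \<partial>lborel) \<le> emeasure N (space N)"
proof (cases "\<exists>f. f \<in> borel_measurable lborel \<and> density lborel f = N")
  case True
  then obtain f where "f \<in> borel_measurable lborel" "density lborel f = N" by auto
  then have e: "density lborel (RN_deriv lborel N) = N" by (rule RN_derivI)
  have "emeasure N (space N) = emeasure (density lborel (RN_deriv lborel N)) UNIV"
    by (subst e) (metis e space_borel space_density space_lborel)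
  also have "\<dots> = (\<integral>\<^sup>+ x. RN_deriv lborel N x \<partial>lborel)"
    by (subst emeasure_density) auto
  finally show ?thesis by simp
next
  case False
  then show ?thesis by (auto simp: RN_deriv_def)
qed

lemma pPG_int: "(\<integral>\<^sup>+ w. ennreal (p_PG 1 0 w) \<partial>lborel) < \<infinity>"
proof -
  interpret P: prob_space "PG_law 1 0" by (rule PG_prob)
  have "(\<integral>\<^sup>+ w. ennreal (p_PG 1 0 w) \<partial>lborel) \<le> (\<integral>\<^sup>+ x. RN_deriv lborel (PG_law 1 0) x \<partial>lborel)"
    unfolding p_PG_def by (intro nn_integral_mono) (simp add: ennreal_enn2real_if)
  also have "\<dots> \<le> emeasure (PG_law 1 0) (space (PG_law 1 0))" by (rule RN_int_le)
  also have "\<dots> = 1" by (rule P.emeasure_space_1)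
  finally show ?thesis by (simp add: order_le_less_trans)
qed

lemma powr_int:
  assumes "0 < \<rho>" "0 \<le> y"
  shows "(\<integral>\<^sup>+ t. ennreal (indicator {0..y} t * t powr (\<rho> - 1)) \<partial>lborel) < \<infinity>"
proof -
  obtain I where I: "((\<lambda>t. t powr (\<rho> - 1)) has_integral I) {0..y}"
    using integrable_on_powr_from_0[of "\<rho> - 1" y] assms by auto
  have "(\<integral>\<^sup>+ t. ennreal (indicator {0..y} t * t powr (\<rho> - 1)) \<partial>lborel) = I"
    by (rule nn_integral_has_integral_lebesgue[OF _ I]) simp
  then show ?thesis by simp
qed



lemma sigmoid_mono: "a \<le> b \<Longrightarrow> sigmoid a \<le> sigmoid b"
  unfolding sigmoid_def by (intro divide_left_mono) (auto intro!: add_pos_pos mult_pos_pos)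

lemma sigmoid_pos: "0 < sigmoid a"
  unfolding sigmoid_def by (simp add: add_pos_pos)

lemma snd_ge: "\<bar>x\<bar> \<le> 1 \<Longrightarrow> std_normal_density 1 \<le> std_normal_density x"
  unfolding normal_density_def
  by (intro mult_left_mono) (auto simp: abs_le_square_iff power2_eq_square abs_square_le_1[of x, unfolded power2_eq_square])

lemma Z_bound:
  fixes g :: "real \<Rightarrow> 'p \<Rightarrow> real^'m \<Rightarrow> real"
  assumes cont: "continuous_on ({0..y} \<times> UNIV) (\<lambda>(t, th). g t x th)"
  shows "\<exists>c>0. \<forall>t\<in>{0..y}. Zfun g t x = 0 \<or> c \<le> Zfun g t x"
proof -
  define C :: "(real^'m) set" where "C = cbox (\<chi> _. -1) (\<chi> _. 1)"
  have memC: "th \<in> C \<longleftrightarrow> (\<forall>i. -1 \<le> th $ i \<and> th $ i \<le> 1)" for th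
    unfolding C_def mem_box_cart by simp
  have cpt: "compact ((\<lambda>(t, th). g t x th) ` ({0..y} \<times> C))"
    by (rule compact_continuous_image) (auto intro: continuous_on_subset[OF cont] compact_Times simp: C_def)
  then obtain G where G: "\<And>t th. t \<in> {0..y} \<Longrightarrow> th \<in> C \<Longrightarrow> \<bar>g t x th\<bar> \<le> G"
  proof -
    from compact_imp_bounded[OF cpt] obtain a where "\<forall>z\<in>(\<lambda>(t, th). g t x th) ` ({0..y} \<times> C). norm z \<le> a"
      unfolding bounded_iff by blast
    then have "\<And>t th. t \<in> {0..y} \<Longrightarrow> th \<in> C \<Longrightarrow> \<bar>g t x th\<bar> \<le> a" by fastforce
    then show ?thesis using that by blast
  qed
  define c0 where "c0 = std_normal_density 1"
  have c0: "0 < c0" unfolding c0_def normal_density_def by simp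
  define c1 where "c1 = sigmoid (- G) * c0 ^ CARD('m)"
  have c1: "0 < c1" unfolding c1_def using c0 sigmoid_pos by simp
  define vol where "vol = measure lborel C"
  have "C \<noteq> {}" using memC[of 0] by auto
  then have vol_eq: "vol = (\<Prod>i\<in>(UNIV::'m set). 2)" unfolding vol_def C_def
    by (subst content_cbox_cart) auto
  have vol: "0 < vol" unfolding vol_eq by simp
  have "\<forall>t\<in>{0..y}. Zfun g t x = 0 \<or> c1 * vol \<le> Zfun g t x"
  proof
    fix t assume t: "t \<in> {0..y}"
    define F where "F = (\<lambda>\<theta>::real^'m. sigmoid (g t x \<theta>) * (\<Prod>j\<in>UNIV. std_normal_density (\<theta> $ j)))"
    show "Zfun g t x = 0 \<or> c1 * vol \<le> Zfun g t x"
    proof (cases "integrable lborel F")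
      case False
      then show ?thesis unfolding Zfun_def F_def[symmetric] by (simp add: not_integrable_integral_eq)
    next
      case True
      have Cs: "C \<in> sets lborel" unfolding C_def by simp
      have Cf: "emeasure lborel C < \<infinity>" unfolding C_def by (rule emeasure_bounded_finite) simp
      have "c1 * vol = (\<integral>\<theta>. indicator C \<theta> * c1 \<partial>lborel)"
        using Cs Cf by (simp add: vol_def measure_def)
      also have "\<dots> \<le> (\<integral>\<theta>. F \<theta> \<partial>lborel)"
      proof (rule integral_mono)
        show "integrable lborel (\<lambda>\<theta>. indicator C \<theta> * c1)"
          using Cs Cf by (intro integrable_mult_left) auto
        show "integrable lborel F" by (rule True)
        fix \<theta> :: "real^'m"
        have Fnn: "0 \<le> F \<theta>" unfolding F_def using sigmoid_pos
          by (intro mult_nonneg_nonneg prod_nonneg) (auto intro: less_imp_le)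
        show "indicator C \<theta> * c1 \<le> F \<theta>"
        proof (cases "\<theta> \<in> C")
          case False then show ?thesis using Fnn by simp
        next
          case True
          have "sigmoid (- G) \<le> sigmoid (g t x \<theta>)"
            using G[OF t True] by (intro sigmoid_mono) auto
          moreover have "c0 ^ CARD('m) \<le> (\<Prod>j\<in>UNIV. std_normal_density (\<theta> $ j))"
          proof -
            have "c0 ^ CARD('m) = (\<Prod>j\<in>(UNIV::'m set). c0)" by simp
            also have "\<dots> \<le> (\<Prod>j\<in>UNIV. std_normal_density (\<theta> $ j))"
              using True memC c0 unfolding c0_def
              by (intro prod_mono) (auto intro!: snd_ge simp: less_imp_le abs_le_iff)
            finally show ?thesis .
          qed
          ultimately show ?thesis using True c0 sigmoid_pos[of "-G"] unfolding F_def c1_def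
            by (auto intro!: mult_mono simp: less_imp_le)
        qed
      qed
      finally show ?thesis unfolding Zfun_def F_def by simp
    qed
  qed
  then show ?thesis using c1 vol by (intro exI[of _ "c1 * vol"]) auto
qed



lemma count_finite_AE:
  fixes X :: "'a \<Rightarrow> ennreal"
  assumes P: "prob_space M" and Xm: "X \<in> borel_measurable M"
    and Xr: "\<forall>s\<in>space M. X s \<in> insert \<infinity> (range of_nat)"
    and m: "0 \<le> m"
    and pm: "\<forall>n::nat. measure M {s\<in>space M. X s = of_nat n} = exp (- m) * m ^ n / fact n"
  shows "AE s in M. X s < \<infinity>"
proof -
  interpret prob_space M by (rule P)
  define S where "S n = {s\<in>space M. X s = of_nat n}" for n :: nat
  have Ss: "range S \<subseteq> sets M" unfolding S_def using Xm by auto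
  have Sd: "disjoint_family S" unfolding S_def disjoint_family_on_def by auto
  have eq: "{s\<in>space M. X s < \<infinity>} = (\<Union>n. S n)"
    using Xr unfolding S_def by (auto simp: of_nat_less_top)
  have sm: "(\<lambda>n. exp (- m) * m ^ n / fact n) sums (exp (- m) * exp m)"
  proof -
    have "(\<lambda>n. exp (- m) * (m ^ n /\<^sub>R fact n)) = (\<lambda>n. exp (- m) * m ^ n / fact n)"
      by (rule ext) (simp add: scaleR_conv_of_real divide_inverse)
    then show ?thesis using sums_mult[OF exp_converges[of m], of "exp (- m)"] by simp
  qed
  have sm1: "(\<lambda>n. exp (- m) * m ^ n / fact n) sums 1"
    using sm by (simp add: exp_minus field_simps)
  have "emeasure M {s\<in>space M. X s < \<infinity>} = (\<Sum>n. emeasure M (S n))"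
    unfolding eq by (rule suminf_emeasure[OF Ss Sd, symmetric])
  also have "\<dots> = (\<Sum>n. ennreal (exp (- m) * m ^ n / fact n))"
    by (simp add: emeasure_eq_measure S_def pm)
  also have "\<dots> = ennreal 1"
    using sm1 m by (subst suminf_ennreal2) (auto simp: sums_iff)
  finally have "prob {s\<in>space M. X s < \<infinity>} = 1"
    by (simp add: emeasure_eq_measure)
  moreover have "{s\<in>space M. X s < \<infinity>} \<in> sets M" using Xm by measurable
  ultimately show ?thesis using prob_Collect_eq_1[of "\<lambda>s. X s < \<infinity>"] by simp
qed

lemma count_zero_AE:
  fixes X :: "'a \<Rightarrow> ennreal"
  assumes P: "prob_space M" and Xm: "X \<in> borel_measurable M"
    and pm: "measure M {s\<in>space M. X s = of_nat 0} = exp (- 0) * 0 ^ 0 / fact 0"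
  shows "AE s in M. X s = 0"
proof -
  interpret prob_space M by (rule P)
  have "prob {s\<in>space M. X s = 0} = 1" using pm by simp
  moreover have "{s\<in>space M. X s = 0} \<in> sets M" using Xm by measurable
  ultimately show ?thesis using prob_Collect_eq_1[of "\<lambda>s. X s = 0"] by simp
qed

lemma fin_int:
  fixes \<nu> :: "(real \<times> real) measure" and h :: "real \<times> real \<Rightarrow> real"
  assumes sets: "sets \<nu> = sets borel"
    and intv: "\<forall>A\<in>sets borel. emeasure \<nu> A \<in> insert \<infinity> (range of_nat)"
    and fin: "emeasure \<nu> UNIV < \<infinity>"
    and hm: "h \<in> borel_measurable borel"
  shows "(\<integral>\<^sup>+ p. ennreal (h p) \<partial>\<nu>) < \<infinity>"
proof -
  have sp: "space \<nu> = UNIV" using sets_eq_imp_space_eq[OF sets] by simp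
  have hm': "h \<in> borel_measurable \<nu>" using hm measurable_cong_sets[OF sets refl] by blast
  define A where "A n = {p. real n \<le> h p}" for n :: nat
  have As: "A n \<in> sets \<nu>" for n
  proof -
    have "{p\<in>space \<nu>. real n \<le> h p} \<in> sets \<nu>" using hm' by measurable
    then show ?thesis unfolding A_def sp by simp
  qed
  have Ad: "decseq A" unfolding A_def decseq_def by auto
  have Ai: "(\<Inter>n. A n) = {}"
  proof -
    have "\<exists>n. h p < real n" for p using reals_Archimedean2 by blast
    then show ?thesis unfolding A_def by (auto simp: not_le[symmetric])
  qed
  have Af: "emeasure \<nu> (A n) \<noteq> \<infinity>" for n
  proof -
    have "emeasure \<nu> (A n) \<le> emeasure \<nu> UNIV"
      by (rule emeasure_mono) (use sp sets.top[of \<nu>] in auto)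
    from order_le_less_trans[OF this fin] show ?thesis by simp
  qed
  have "(INF n. emeasure \<nu> (A n)) = 0"
    using INF_emeasure_decseq[of A \<nu>, OF _ Ad Af] As Ai by (simp add: image_subset_iff)
  then have "(INF n. emeasure \<nu> (A n)) < 1" by simp
  then obtain n where n1: "emeasure \<nu> (A n) < 1" by (auto simp: INF_less_iff)
  have "emeasure \<nu> (A n) \<in> insert \<infinity> (range of_nat)"
    using intv As sets by blast
  then obtain k where "emeasure \<nu> (A n) = of_nat k" using Af by blast
  with n1 have A0: "emeasure \<nu> (A n) = 0" by (cases k) auto
  have "AE p in \<nu>. h p < real n"
  proof (rule AE_I'[of "A n"])
    show "A n \<in> null_sets \<nu>" using A0 As by (simp add: null_setsI)
    show "{p \<in> space \<nu>. \<not> h p < real n} \<subseteq> A n" unfolding A_def by (auto simp: not_less)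
  qed
  then have "AE p in \<nu>. ennreal (h p) \<le> ennreal (real n)"
    by (rule eventually_mono) (simp add: ennreal_leI)
  then have "(\<integral>\<^sup>+ p. ennreal (h p) \<partial>\<nu>) \<le> (\<integral>\<^sup>+ p. ennreal (real n) \<partial>\<nu>)"
    by (rule nn_integral_mono_AE)
  also have "\<dots> = ennreal (real n) * emeasure \<nu> UNIV" using sp by simp
  also have "\<dots> < \<infinity>" using fin by (simp add: ennreal_mult_less_top)
  finally show ?thesis .
qed



theorem mainTheorem4:
  fixes N :: nat and y :: "nat \<Rightarrow> real" and xs :: "nat \<Rightarrow> real^'p"
    and g :: "real \<Rightarrow> real^'p \<Rightarrow> real^'m \<Rightarrow> real"
    and \<rho> \<phi> :: real and \<theta> :: "real^'m"
    and M :: "'a measure" and \<Psi> :: "nat \<Rightarrow> 'a \<Rightarrow> (real \<times> real) measure"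
  assumes y_pos: "\<forall>i\<in>{1..N}. 0 < y i"
    and rho_pos: "0 < \<rho>"
    and g_cont: "\<forall>i\<in>{1..N}. continuous_on ({0..y i} \<times> UNIV) (\<lambda>(t, th). g t (xs i) th)"
    and phi_pos: "0 < \<phi>"
    and PPP: "\<forall>i\<in>{1..N}. poisson_process M (\<Psi> i)
               (\<lambda>(t, \<omega>). indicator ({0..y i} \<times> {0..}) (t, \<omega>) *
                          lambda0x \<rho> g \<phi> t (xs i) * p_PG 1 0 \<omega>)"
  shows "\<forall>i\<in>{1..N}. AE s in M.
           (\<integral>\<^sup>+ p. ennreal \<bar>fPG (snd p) (- g (fst p) (xs i) \<theta>)\<bar> \<partial>(\<Psi> i s)) < \<infinity>"
proof
  fix i assume i: "i \<in> {1..N}"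
  define Y where "Y = y i"
  define x where "x = xs i"
  define B :: "(real \<times> real) set" where "B = {0..Y} \<times> {0..}"
  define Lam where "Lam = (\<lambda>(t, \<omega>). indicator B (t, \<omega>) * lambda0x \<rho> g \<phi> t x * p_PG 1 0 \<omega>)"
  have Y: "0 < Y" using y_pos i Y_def by auto
  have cont: "continuous_on ({0..Y} \<times> UNIV) (\<lambda>(t, th). g t x th)"
    using g_cont i unfolding Y_def x_def by auto
  have PP: "poisson_process M (\<Psi> i) Lam"
    using PPP i unfolding Lam_def B_def Y_def x_def by auto
  note PP = PP[unfolded poisson_process_def]
  have P: "prob_space M" using PP by blast
  have Psets: "\<And>s. s \<in> space M \<Longrightarrow> sets (\<Psi> i s) = sets borel" using PP by blast
  have Pint: "\<And>s. s \<in> space M \<Longrightarrow> \<forall>A\<in>sets borel. emeasure (\<Psi> i s) A \<in> insert \<infinity> (range of_nat)"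
    using PP by blast
  have Pmeas: "\<And>A. A \<in> sets borel \<Longrightarrow> (\<lambda>s. emeasure (\<Psi> i s) A) \<in> borel_measurable M"
    using PP by blast
  have Ppois: "\<And>A. A \<in> sets borel \<Longrightarrow>
        (let \<mu> = (\<integral>\<^sup>+ p. ennreal (Lam p) * indicator A p \<partial>lborel) in
        (\<mu> = \<infinity> \<longrightarrow> (AE s in M. emeasure (\<Psi> i s) A = \<infinity>)) \<and>
        (\<mu> < \<infinity> \<longrightarrow> (\<forall>n::nat. measure M {s\<in>space M. emeasure (\<Psi> i s) A = of_nat n}
                        = exp (- enn2real \<mu>) * enn2real \<mu> ^ n / fact n)))"
    using PP by blast
  have Bclosed: "closed B" unfolding B_def by (intro closed_Times) auto
  then have Bs: "B \<in> sets borel" by simp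
  have Bcs: "- B \<in> sets borel" using Bs by simp
  obtain c where c: "0 < c" and cZ: "\<And>t. t \<in> {0..Y} \<Longrightarrow> Zfun g t x = 0 \<or> c \<le> Zfun g t x"
    using Z_bound[of Y g x, OF cont] by blast
  define K where "K = \<phi> / c"
  have K: "0 < K" unfolding K_def using c phi_pos by simp
  have pPG_nn: "0 \<le> p_PG 1 0 w" for w unfolding p_PG_def by simp
  have bound: "Lam (t, w) \<le> K * (indicator {0..Y} t * t powr (\<rho> - 1)) * p_PG 1 0 w" for t w
  proof (cases "(t, w) \<in> B")
    case False
    then show ?thesis unfolding Lam_def using K pPG_nn by (simp add: indicator_def)
  next
    case True
    then have t: "t \<in> {0..Y}" unfolding B_def by auto
    have "lambda0x \<rho> g \<phi> t x \<le> K * t powr (\<rho> - 1)"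
    proof (cases "Zfun g t x = 0")
      case True then show ?thesis using K unfolding lambda0x_def by simp
    next
      case False
      then have Zc: "c \<le> Zfun g t x" using cZ[OF t] by auto
      have "lambda0x \<rho> g \<phi> t x = \<phi> * t powr (\<rho> - 1) / Zfun g t x"
        unfolding lambda0x_def lambda0_def by simp
      also have "\<dots> \<le> \<phi> * t powr (\<rho> - 1) / c"
        using Zc c phi_pos by (intro divide_left_mono) auto
      finally show ?thesis unfolding K_def by simp
    qed
    then show ?thesis unfolding Lam_def using True t pPG_nn
      by (auto intro: mult_right_mono)
  qed
  have muU: "(\<integral>\<^sup>+ p. ennreal (Lam p) * indicator UNIV p \<partial>lborel) < \<infinity>"
  proof -
    define a where "a t = ennreal K * ennreal (indicator {0..Y} t * t powr (\<rho> - 1))" for t :: real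
    have am: "a \<in> borel_measurable lborel" unfolding a_def by measurable
    have pm: "(\<lambda>w. ennreal (p_PG 1 0 w)) \<in> borel_measurable lborel" unfolding p_PG_def by measurable
    have "(\<integral>\<^sup>+ p. ennreal (Lam p) * indicator UNIV p \<partial>lborel)
        \<le> (\<integral>\<^sup>+ p. a (fst p) * ennreal (p_PG 1 0 (snd p)) \<partial>(lborel :: (real \<times> real) measure))"
    proof (rule nn_integral_mono)
      fix p :: "real \<times> real"
      obtain t w where p: "p = (t, w)" by (cases p)
      have "ennreal (Lam p) \<le> ennreal (K * (indicator {0..Y} t * t powr (\<rho> - 1)) * p_PG 1 0 w)"
        unfolding p by (rule ennreal_leI[OF bound])
      also have "\<dots> = a (fst p) * ennreal (p_PG 1 0 (snd p))"
        unfolding a_def p using K pPG_nn by (simp add: ennreal_mult)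
      finally show "ennreal (Lam p) * indicator UNIV p \<le> a (fst p) * ennreal (p_PG 1 0 (snd p))"
        by simp
    qed
    also have "\<dots> = (\<integral>\<^sup>+ p. a (fst p) * ennreal (p_PG 1 0 (snd p)) \<partial>(lborel \<Otimes>\<^sub>M lborel))"
      by (simp add: lborel_prod)
    also have "\<dots> = (\<integral>\<^sup>+ t. \<integral>\<^sup>+ w. a t * ennreal (p_PG 1 0 w) \<partial>lborel \<partial>lborel)"
    proof -
      have "(\<lambda>p. a (fst p) * ennreal (p_PG 1 0 (snd p))) \<in> borel_measurable (lborel \<Otimes>\<^sub>M lborel)"
        using am pm by measurable
      from lborel.nn_integral_fst[OF this] show ?thesis by simp
    qed
    also have "\<dots> = (\<integral>\<^sup>+ t. a t * (\<integral>\<^sup>+ w. ennreal (p_PG 1 0 w) \<partial>lborel) \<partial>lborel)"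
      by (subst nn_integral_cmult[OF pm]) simp
    also have "\<dots> = (\<integral>\<^sup>+ t. a t \<partial>lborel) * (\<integral>\<^sup>+ w. ennreal (p_PG 1 0 w) \<partial>lborel)"
      by (rule nn_integral_multc[OF am])
    also have "\<dots> < \<infinity>"
    proof -
      have "(\<integral>\<^sup>+ t. a t \<partial>lborel) = ennreal K * (\<integral>\<^sup>+ t. ennreal (indicator {0..Y} t * t powr (\<rho> - 1)) \<partial>lborel)"
        unfolding a_def by (rule nn_integral_cmult) measurable
      also have "\<dots> < \<infinity>" using powr_int[OF rho_pos, of Y] Y by (simp add: ennreal_mult_less_top)
      finally show ?thesis using pPG_int by (simp add: ennreal_mult_less_top)
    qed
    finally show ?thesis .
  qed
  have muC: "(\<integral>\<^sup>+ p. ennreal (Lam p) * indicator (- B) p \<partial>lborel) = 0"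
    by (rule nn_integral_zero') (auto simp: Lam_def indicator_def)
  have AE1: "AE s in M. emeasure (\<Psi> i s) UNIV < \<infinity>"
  proof (rule count_finite_AE[OF P])
    show "(\<lambda>s. emeasure (\<Psi> i s) UNIV) \<in> borel_measurable M" using Pmeas by simp
    show "\<forall>s\<in>space M. emeasure (\<Psi> i s) UNIV \<in> insert \<infinity> (range of_nat)" using Pint by simp
    show "\<forall>n::nat. measure M {s\<in>space M. emeasure (\<Psi> i s) UNIV = of_nat n}
      = exp (- enn2real (\<integral>\<^sup>+ p. ennreal (Lam p) * indicator UNIV p \<partial>lborel)) *
        enn2real (\<integral>\<^sup>+ p. ennreal (Lam p) * indicator UNIV p \<partial>lborel) ^ n / fact n"
      using Ppois[of UNIV] muU by (simp add: Let_def)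
  qed simp
  have AE2: "AE s in M. emeasure (\<Psi> i s) (- B) = 0"
  proof (rule count_zero_AE[OF P])
    show "(\<lambda>s. emeasure (\<Psi> i s) (- B)) \<in> borel_measurable M" using Pmeas Bcs by simp
    show "measure M {s\<in>space M. emeasure (\<Psi> i s) (- B) = of_nat 0} = exp (- 0) * 0 ^ 0 / fact 0"
    proof -
      have "\<forall>n::nat. measure M {s\<in>space M. emeasure (\<Psi> i s) (- B) = of_nat n} = 0 ^ n / fact n"
        using Ppois[OF Bcs] muC by (simp add: Let_def)
      from spec[OF this, of 0] show ?thesis by simp
    qed
  qed
  have gc: "continuous_on B (\<lambda>p. \<bar>fPG (snd p) (- g (fst p) x \<theta>)\<bar>)"
  proof -
    have "continuous_on B (\<lambda>p. (\<lambda>(t, th). g t x th) (fst p, \<theta>))"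
      by (rule continuous_on_compose2[OF cont]) (auto simp: B_def intro!: continuous_intros)
    then have "continuous_on B (\<lambda>p. g (fst p) x \<theta>)" by simp
    then show ?thesis unfolding fPG_def by (intro continuous_intros) auto
  qed
  have hm: "(\<lambda>p. indicator B p *\<^sub>R \<bar>fPG (snd p) (- g (fst p) x \<theta>)\<bar>) \<in> borel_measurable borel"
    by (rule borel_measurable_continuous_on_indicator[OF Bs gc])
  have "AE s in M. (\<integral>\<^sup>+ p. ennreal \<bar>fPG (snd p) (- g (fst p) x \<theta>)\<bar> \<partial>(\<Psi> i s)) < \<infinity>"
    using AE1 AE2 AE_space
  proof eventually_elim
    case (elim s)
    have sets: "sets (\<Psi> i s) = sets borel" using Psets elim by simp
    have sp: "space (\<Psi> i s) = UNIV" using sets_eq_imp_space_eq[OF sets] by simp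
    have "AE p in \<Psi> i s. p \<in> B"
    proof (rule AE_I'[of "- B"])
      show "- B \<in> null_sets (\<Psi> i s)" using elim Bcs sets by (simp add: null_setsI)
    qed auto
    then have "(\<integral>\<^sup>+ p. ennreal \<bar>fPG (snd p) (- g (fst p) x \<theta>)\<bar> \<partial>(\<Psi> i s))
        = (\<integral>\<^sup>+ p. ennreal (indicator B p *\<^sub>R \<bar>fPG (snd p) (- g (fst p) x \<theta>)\<bar>) \<partial>(\<Psi> i s))"
      by (intro nn_integral_cong_AE) (erule eventually_mono, simp)
    also have "\<dots> < \<infinity>"
      by (rule fin_int[OF sets _ _ hm]) (use elim Pint in auto)
    finally show ?case .
  qed
  then show "AE s in M. (\<integral>\<^sup>+ p. ennreal \<bar>fPG (snd p) (- g (fst p) (xs i) \<theta>)\<bar> \<partial>(\<Psi> i s)) < \<infinity>"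
    unfolding x_def .
qed

end
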